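(* Let $n\ge0$ and $l\ge0$. In $H^*(\operatorname{Gr}_2(\mathbb{R}^\infty);\mathbb{Z}/2)=\mathbb{Z}/2[w_1,w_2]$, $$Q_n(w_1\bar w_{2l}) = w_1\bar w_{2^{n+1}-1+2l}.$$
   Context: $w_1,w_2$ are the Stiefel–Whitney classes of the tautological $2$-plane bundle; $\bar w_k$ are defined by $(1+w_1+w_2)(1+\bar w_1+\bar w_2+\cdots)=1$, with $\bar w_0=1$. $Q_n$ is the Milnor primitive: $Q_0=Sq^1$, $Q_n=[Q_{n-1},Sq^{2^n}]$. *)

theory Defs
  imports "HOL-Library.Z2" "HOL-Computational_Algebra.Polynomial"
begin

text \<open>H^*(Gr_2(R^infty); Z/2) = Z/2[w1,w2] is modelled as the type bit poly poly:
 the outer variable is w2, the inner (coefficient) variable is w1.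
 The monomial w1^a w2^b has coefficient coeff (coeff p b) a.
 Grading: deg w1 = 1, deg w2 = 2.\<close>

type_synonym H = "bit poly poly"

definition w1 :: H where "w1 = [: [:0, 1:] :]"
definition w2 :: H where "w2 = [:0, 1:]"

definition comp :: "nat \<Rightarrow> H \<Rightarrow> H" where
  "comp d p = (\<Sum>b\<le>d div 2. monom (monom (coeff (coeff p b) (d - 2*b)) (d - 2*b)) b)"

definition degbound :: "H \<Rightarrow> nat" where
  "degbound p = 2 * degree p + (\<Sum>b\<le>degree p. degree (coeff p b)) + 1"

text \<open>Total Steenrod square Sq = Sq^0 + Sq^1 + ...: the ring endomorphism with
 Sq(w1) = w1 + w1^2 and Sq(w2) = w2 + w1 w2 + w2^2 (Cartan and Wu formulas).\<close>
definition tsq :: "H \<Rightarrow> H" where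
  "tsq p = poly (map_poly (\<lambda>c. poly (map_poly (\<lambda>a. [:[:a:]:]) c) (w1 + w1^2)) p)
                (w2 + w1 * w2 + w2^2)"

definition Sq :: "nat \<Rightarrow> H \<Rightarrow> H" where
  "Sq k p = (\<Sum>d<degbound p. comp (d + k) (tsq (comp d p)))"

fun Q :: "nat \<Rightarrow> H \<Rightarrow> H" where
  "Q 0 p = Sq 1 p"
| "Q (Suc n) p = Q n (Sq (2^Suc n) p) - Sq (2^Suc n) (Q n p)"

text \<open>Dual Stiefel-Whitney classes, defined by (1+w1+w2)(1+wbar_1+wbar_2+...) = 1,
 i.e. wbar_0 = 1 and wbar_k + w1 wbar_{k-1} + w2 wbar_{k-2} = 0 (wbar_{-1} = 0).\<close>
fun wbar :: "nat \<Rightarrow> H" where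
  "wbar 0 = 1"
| "wbar (Suc 0) = - w1"
| "wbar (Suc (Suc k)) = - (w1 * wbar (Suc k) + w2 * wbar k)"

end

theory Submission imports Defs begin

class char2 = comm_ring_1 + assumes one_one_c2: "1 + 1 = 0"

instance bit :: char2 by standard simp

lemma c2_two[simp]: "(2::'a::char2) = 0"
  by (simp only: one_add_one[symmetric] one_one_c2)

instance poly :: (char2) char2
proof
  have "(1::'a poly) + 1 = [:1 + 1:]" by (simp add: one_pCons)
  thus "(1::'a poly) + 1 = 0" by (simp only: one_one_c2) simp
qed

lemma c2_add_self[simp]: "(a::'a::char2) + a = 0"
proof -
  have "a + a = 2 * a" by (simp add: algebra_simps)
  thus ?thesis by simp
qed

lemma c2_minus[simp]: "- (a::'a::char2) = a"
  using add.inverse_unique[OF c2_add_self] by simp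

lemma c2_diff[simp]: "(a::'a::char2) - b = a + b"
  by (simp add: diff_conv_add_uminus del: add_uminus_conv_diff)

lemma c2_ofnat: "(of_nat k :: 'a::char2) = (if even k then 0 else 1)"
proof (induction k)
  case 0 then show ?case by simp
next
  case (Suc k) then show ?case by (auto simp: one_one_c2)
qed

lemma c2_frob: "((a::'a::char2) + b) ^ (2^k) = a^(2^k) + b^(2^k)"
proof (induction k)
  case 0 then show ?case by simp
next
  case (Suc k)
  have "(a + b) ^ (2^Suc k) = ((a+b)^(2^k))^2" by (simp add: power_mult[symmetric] mult.commute)
  also have "\<dots> = (a^(2^k) + b^(2^k))^2" using Suc by simp
  also have "\<dots> = (a^(2^k))^2 + (b^(2^k))^2"
    by (simp add: power2_eq_square algebra_simps)
  also have "\<dots> = a^(2^Suc k) + b^(2^Suc k)" by (simp add: power_mult[symmetric] mult.commute)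
  finally show ?case .
qed

section \<open>ring homomorphisms\<close>

definition rhom :: "('a::comm_ring_1 \<Rightarrow> 'b::comm_ring_1) \<Rightarrow> bool" where
  "rhom h \<longleftrightarrow> (\<forall>a b. h (a + b) = h a + h b) \<and> (\<forall>a b. h (a * b) = h a * h b) \<and> h 1 = 1"

lemma rhom_add: "rhom h \<Longrightarrow> h (a + b) = h a + h b" by (simp add: rhom_def)
lemma rhom_mult: "rhom h \<Longrightarrow> h (a * b) = h a * h b" by (simp add: rhom_def)
lemma rhom_one: "rhom h \<Longrightarrow> h 1 = 1" by (simp add: rhom_def)
lemma rhom_zero: "rhom h \<Longrightarrow> h 0 = 0"
  using rhom_add[of h 0 0] by simp
lemma rhom_diff: "rhom h \<Longrightarrow> h (a - b) = h a - h b"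
  using rhom_add[of h "a - b" b] by (simp add: algebra_simps)
lemma rhom_sum: "rhom h \<Longrightarrow> h (\<Sum>i\<in>A. f i) = (\<Sum>i\<in>A. h (f i))"
  by (induction A rule: infinite_finite_induct) (auto simp: rhom_zero rhom_add)
lemma rhom_power: "rhom h \<Longrightarrow> h (a ^ k) = h a ^ k"
  by (induction k) (auto simp: rhom_one rhom_mult)
lemma rhom_comp: "rhom h \<Longrightarrow> rhom g \<Longrightarrow> rhom (h \<circ> g)"
  by (simp add: rhom_def)
lemma rhom_id: "rhom id" by (simp add: rhom_def)
lemma rhom_poly: "rhom (\<lambda>p. poly p x)" by (simp add: rhom_def)

lemma map_poly_add_h: "rhom h \<Longrightarrow> map_poly h (p + q) = map_poly h p + map_poly h q"
  by (intro poly_eqI) (simp add: coeff_map_poly rhom_zero rhom_add)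

lemma map_poly_mult_h: "rhom h \<Longrightarrow> map_poly h (p * q) = map_poly h p * map_poly h q"
proof (induction p)
  case 0 then show ?case by (simp add: rhom_zero)
next
  case (pCons a p)
  have s: "map_poly h (smult a q) = smult (h a) (map_poly h q)"
    by (rule map_poly_smult) (simp_all add: pCons(3) rhom_zero rhom_mult)
  show ?case using pCons s
    by (simp add: map_poly_add_h map_poly_pCons rhom_zero)
qed

lemma rhom_map_poly: "rhom h \<Longrightarrow> rhom (map_poly h)"
  unfolding rhom_def[of "map_poly h"]
  by (simp add: map_poly_add_h map_poly_mult_h rhom_one)

section \<open>evaluation\<close>

definition ob :: "bit \<Rightarrow> 'a::char2" where "ob b = (if b = 0 then 0 else 1)"

lemma ob_simps[simp]: "ob 0 = 0" "ob 1 = 1" by (simp_all add: ob_def)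

lemma rhom_ob: "rhom (ob :: bit \<Rightarrow> 'a::char2)"
  unfolding rhom_def
proof (intro conjI allI)
  fix a b :: bit
  show "(ob (a + b) :: 'a) = ob a + ob b" by (cases a; cases b) (simp_all add: one_one_c2)
  show "(ob (a * b) :: 'a) = ob a * ob b" by (cases a; cases b) simp_all
qed simp

definition ev1 :: "'a::char2 \<Rightarrow> bit poly \<Rightarrow> 'a" where
  "ev1 f c = poly (map_poly ob c) f"

definition eval2 :: "'a::char2 \<Rightarrow> 'a \<Rightarrow> bit poly poly \<Rightarrow> 'a" where
  "eval2 f g p = poly (map_poly (ev1 f) p) g"

lemma rhom_ev1: "rhom (ev1 f)"
proof -
  have "ev1 f = (\<lambda>p. poly p f) \<circ> map_poly ob" by (auto simp: ev1_def)
  thus ?thesis by (simp add: rhom_comp rhom_poly rhom_map_poly rhom_ob)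
qed

lemma rhom_eval2: "rhom (eval2 f g)"
proof -
  have "eval2 f g = (\<lambda>p. poly p g) \<circ> map_poly (ev1 f)" by (auto simp: eval2_def)
  thus ?thesis by (simp add: rhom_comp rhom_poly rhom_map_poly rhom_ev1)
qed

lemma ev1_one[simp]: "ev1 f 1 = 1" by (rule rhom_one[OF rhom_ev1])
lemma ev1_pCons: "ev1 f (pCons a c) = ob a + f * ev1 f c"
  by (simp add: ev1_def map_poly_pCons)
lemma ev1_0[simp]: "ev1 f 0 = 0" by (simp add: ev1_def)
lemma eval2_pCons: "eval2 f g (pCons c p) = ev1 f c + g * eval2 f g p"
  by (simp add: eval2_def map_poly_pCons)
lemma eval2_0[simp]: "eval2 f g 0 = 0" by (simp add: eval2_def)

lemma rhom_ob_commute: "rhom h \<Longrightarrow> h (ob a) = ob a"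
  by (cases a) (simp_all add: rhom_zero rhom_one)

lemma ev1_comp: "rhom h \<Longrightarrow> h (ev1 f c) = ev1 (h f) c"
  by (induction c) (simp_all add: ev1_pCons rhom_add rhom_mult rhom_ob_commute rhom_zero)

lemma eval2_comp: "rhom h \<Longrightarrow> h (eval2 f g p) = eval2 (h f) (h g) p"
  by (induction p) (simp_all add: eval2_pCons rhom_add rhom_mult ev1_comp rhom_zero)

lemma eval2_w1[simp]: "eval2 f g w1 = f"
  by (simp add: w1_def eval2_pCons ev1_pCons)
lemma eval2_w2[simp]: "eval2 f g w2 = g"
  by (simp add: w2_def eval2_pCons ev1_pCons)

lemma ob_P: "(ob a :: bit poly poly) = [:[:a:]:]"
  by (cases a) (simp_all add: pCons_one)

lemma ev1_w1: "ev1 w1 c = [:c:]"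
  by (induction c) (simp_all add: ev1_pCons ob_P w1_def)

lemma eval2_id: "eval2 w1 w2 p = p"
  by (induction p) (simp_all add: eval2_pCons ev1_w1 w2_def)

lemma eval2_add: "eval2 f g (a + b) = eval2 f g a + eval2 f g b"
  by (rule rhom_add[OF rhom_eval2])
lemma eval2_mult: "eval2 f g (a * b) = eval2 f g a * eval2 f g b"
  by (rule rhom_mult[OF rhom_eval2])
lemma eval2_one[simp]: "eval2 f g 1 = 1"
  by (rule rhom_one[OF rhom_eval2])
lemma eval2_power: "eval2 f g (a ^ k) = eval2 f g a ^ k"
  by (rule rhom_power[OF rhom_eval2])


section \<open>derivations\<close>

definition der :: "('a::comm_ring_1 \<Rightarrow> 'b::comm_ring_1) \<Rightarrow> ('a \<Rightarrow> 'b) \<Rightarrow> bool" where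
  "der \<delta> \<phi> \<longleftrightarrow> (\<forall>a b. \<delta> (a + b) = \<delta> a + \<delta> b) \<and> (\<forall>a b. \<delta> (a * b) = \<delta> a * \<phi> b + \<phi> a * \<delta> b) \<and> \<delta> 1 = 0"

lemma der_add: "der \<delta> \<phi> \<Longrightarrow> \<delta> (a + b) = \<delta> a + \<delta> b" by (simp add: der_def)
lemma der_mult: "der \<delta> \<phi> \<Longrightarrow> \<delta> (a * b) = \<delta> a * \<phi> b + \<phi> a * \<delta> b" by (simp add: der_def)
lemma der_one: "der \<delta> \<phi> \<Longrightarrow> \<delta> 1 = 0" by (simp add: der_def)
lemma der_zero: "der \<delta> \<phi> \<Longrightarrow> \<delta> 0 = 0"
  using der_add[of \<delta> \<phi> 0 0] by simp
lemma der_ob: "der \<delta> \<phi> \<Longrightarrow> \<delta> (ob a) = 0"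
  by (cases a) (simp_all add: der_zero der_one)

lemma chain_ev1:
  assumes "rhom \<phi>" "der \<delta> \<phi>"
  shows "\<delta> (ev1 f c) = ev1 (\<phi> f) (pderiv c) * \<delta> f"
proof (induction c)
  case 0 then show ?case using assms by (simp add: der_zero)
next
  case (pCons a c)
  show ?case using assms pCons.IH
    by (simp add: ev1_pCons der_add der_mult der_ob ev1_comp pderiv_pCons
        rhom_add[OF rhom_ev1] algebra_simps)
qed

definition dx :: "bit poly poly \<Rightarrow> bit poly poly" where "dx q = map_poly pderiv q"

lemma dx_pCons: "dx (pCons c p) = pCons (pderiv c) (dx p)"
  by (simp add: dx_def map_poly_pCons)
lemma dx_0[simp]: "dx 0 = 0" by (simp add: dx_def)
lemma dx_add: "dx (a + b) = dx a + dx b"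
  by (intro poly_eqI) (simp add: dx_def coeff_map_poly pderiv_add)
lemma dx_smult: "dx (smult c b) = smult c (dx b) + smult (pderiv c) b"
  by (intro poly_eqI) (simp add: dx_def coeff_map_poly pderiv_mult algebra_simps)
lemma dx_mult: "dx (a * b) = dx a * b + a * dx b"
proof (induction a)
  case 0 then show ?case by simp
next
  case (pCons c a)
  show ?case using pCons.IH
    by (simp add: dx_smult dx_add dx_pCons algebra_simps)
qed
lemma dx_one[simp]: "dx 1 = 0"
proof -
  have "dx 1 = dx (pCons 1 0)" by (simp add: pCons_one)
  also have "\<dots> = 0" by (simp only: dx_pCons) simp
  finally show ?thesis .
qed

lemma der_dx: "der dx id" by (simp add: der_def dx_add dx_mult algebra_simps)
lemma der_pderiv: "der (pderiv :: bit poly poly \<Rightarrow> _) id" by (simp add: der_def pderiv_add pderiv_mult algebra_simps)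

lemma chain_eval2:
  assumes "rhom \<phi>" "der \<delta> \<phi>"
  shows "\<delta> (eval2 f g p) = eval2 (\<phi> f) (\<phi> g) (dx p) * \<delta> f + eval2 (\<phi> f) (\<phi> g) (pderiv p) * \<delta> g"
proof (induction p)
  case 0 then show ?case using assms by (simp add: der_zero)
next
  case (pCons c p)
  show ?case using assms pCons.IH
    by (simp add: eval2_pCons dx_pCons der_add der_mult chain_ev1 eval2_comp pderiv_pCons
        eval2_add algebra_simps)
qed

lemma rhom_coeff0: "rhom (\<lambda>r. coeff r 0)" by (simp add: rhom_def coeff_mult_0)

lemma coeff_mult_1: "coeff (a * b) 1 = coeff a 0 * coeff b 1 + coeff a 1 * coeff b 0"
  by (simp add: coeff_mult)

lemma der_coeff1: "der (\<lambda>r. coeff r 1) (\<lambda>r. coeff r 0)"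
  unfolding der_def by (simp add: coeff_mult_1[simplified] mult.commute)


type_synonym P = "bit poly poly"

definition scl :: "nat \<Rightarrow> nat \<Rightarrow> P \<Rightarrow> P poly" where
  "scl \<alpha> \<beta> q = eval2 (monom w1 \<alpha>) (monom w2 \<beta>) q"

lemma ob_poly: "(ob a :: 'a::char2 poly) = [:ob a:]"
  by (cases a) (simp_all add: pCons_one)

lemma w1_mult: "coeff (w1 * r) b = [:0,1:] * coeff r b"
  by (simp add: w1_def)
lemma ob_bit[simp]: "(ob a :: bit) = a" by (cases a) simp_all
lemma w2_mult: "w2 * r = pCons 0 r"
  by (simp add: w2_def)

lemma ev1_scl:
  assumes "\<alpha> > 0"
  shows "coeff (coeff (coeff (ev1 (monom w1 \<alpha>) c) e) b) a = (if b = 0 \<and> \<alpha>*a = e then coeff c a else 0)"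
  using assms
proof (induction c arbitrary: e a)
  case 0 then show ?case by simp
next
  case (pCons a0 c)
  show ?case
    using pCons.IH pCons.prems
    by (auto simp: ev1_pCons ob_poly ob_P coeff_monom_mult w1_mult coeff_pCons
        split: nat.split)
qed

lemma scl_coeff:
  assumes "\<alpha> > 0" "\<beta> > 0"
  shows "coeff (coeff (coeff (scl \<alpha> \<beta> q) e) b) a = (if \<alpha>*a + \<beta>*b = e then coeff (coeff q b) a else 0)"
  using assms
proof (induction q arbitrary: e b)
  case 0 then show ?case by (simp add: scl_def)
next
  case (pCons c q)
  have IH: "coeff (coeff (coeff (eval2 (monom w1 \<alpha>) (monom w2 \<beta>) q) e) b) a =
    (if \<alpha>*a + \<beta>*b = e then coeff (coeff q b) a else 0)" for e b
    using pCons.IH[of e b] pCons.prems by (simp add: scl_def)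
  show ?case
    using IH pCons.prems
    by (auto simp: scl_def eval2_pCons ev1_scl coeff_monom_mult w2_mult coeff_pCons
        split: nat.split)
qed


definition compP :: "nat \<Rightarrow> P \<Rightarrow> P" where "compP d q = coeff (scl 1 1 q) d"

lemma rhom_scl: "rhom (scl \<alpha> \<beta>)"
proof -
  have "scl \<alpha> \<beta> = eval2 (monom w1 \<alpha>) (monom w2 \<beta>)" by (auto simp: scl_def)
  thus ?thesis by (simp add: rhom_eval2)
qed

lemma compP_coeff: "coeff (coeff (compP d q) j) i = (if i + j = d then coeff (coeff q j) i else 0)"
  using scl_coeff[of 1 1 q d j i] by (simp add: compP_def)

lemma comp_coeff: "coeff (coeff (comp d p) b) a = (if a + 2*b = d then coeff (coeff p b) a else 0)"
proof -
  have "coeff (comp d p) b = (if b \<le> d div 2 then monom (coeff (coeff p b) (d - 2*b)) (d - 2*b) else 0)"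
    by (simp add: comp_def coeff_sum coeff_monom sum.delta)
  then show ?thesis by (auto simp: coeff_monom)
qed

lemma comp_scl: "comp d p = coeff (scl 1 2 p) d"
  by (intro poly_eqI) (simp add: comp_coeff scl_coeff)

lemma compP_add: "compP d (a + b) = compP d a + compP d b"
  by (simp add: compP_def rhom_add[OF rhom_scl])
lemma compP_zero[simp]: "compP d 0 = 0"
  by (simp add: compP_def rhom_zero[OF rhom_scl])
lemma compP_sum: "compP d (\<Sum>i\<in>A. f i) = (\<Sum>i\<in>A. compP d (f i))"
  by (simp add: compP_def rhom_sum[OF rhom_scl] coeff_sum)
lemma compP_mult: "compP d (a * b) = (\<Sum>i\<le>d. compP i a * compP (d - i) b)"
  by (simp add: compP_def rhom_mult[OF rhom_scl] coeff_mult)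

definition homP :: "nat \<Rightarrow> P \<Rightarrow> bool" where "homP d q \<longleftrightarrow> compP d q = q"

lemma homP_iff: "homP d q \<longleftrightarrow> (\<forall>i j. i + j \<noteq> d \<longrightarrow> coeff (coeff q j) i = 0)"
proof
  assume "homP d q"
  then have "coeff (coeff (compP d q) j) i = coeff (coeff q j) i" for i j by (simp add: homP_def)
  then have *: "(if i + j = d then coeff (coeff q j) i else 0) = coeff (coeff q j) i" for i j
    by (simp add: compP_coeff)
  show "\<forall>i j. i + j \<noteq> d \<longrightarrow> coeff (coeff q j) i = 0"
  proof (intro allI impI)
    fix i j assume "i + j \<noteq> d"
    with *[of i j] show "coeff (coeff q j) i = 0" by simp
  qed
next
  assume "\<forall>i j. i + j \<noteq> d \<longrightarrow> coeff (coeff q j) i = 0"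
  then show "homP d q" unfolding homP_def
    by (intro poly_eqI) (simp add: compP_coeff)
qed

lemma compP_hom: "homP e h \<Longrightarrow> compP d h = (if d = e then h else 0)"
  unfolding homP_iff by (intro poly_eqI) (auto simp: compP_coeff)

lemma homP_compP: "homP d (compP d q)"
  unfolding homP_iff by (auto simp: compP_coeff)

lemma compP_compP: "compP d (compP e q) = (if d = e then compP e q else 0)"
  by (rule compP_hom[OF homP_compP])

lemma compP_mult_hom: "homP e a \<Longrightarrow> compP d (a * b) = (if e \<le> d then a * compP (d - e) b else 0)"
  by (simp add: compP_mult compP_hom if_distrib if_distribR sum.delta cong: if_cong)

lemma homP_mult: "homP e a \<Longrightarrow> homP f b \<Longrightarrow> homP (e + f) (a * b)"
  unfolding homP_def[of "e+f"] by (simp add: compP_mult_hom homP_def)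

lemma homP_add: "homP d a \<Longrightarrow> homP d b \<Longrightarrow> homP d (a + b)"
  by (simp add: homP_def compP_add)

lemma homP_zero[simp]: "homP d 0" by (simp add: homP_def)

lemma homP_one: "homP 0 1"
  by (simp add: homP_def compP_def rhom_one[OF rhom_scl])

lemma homP_w1: "homP 1 w1"
  by (simp add: homP_def compP_def scl_def)
lemma homP_w2: "homP 1 w2"
  by (simp add: homP_def compP_def scl_def)

lemma homP_power: "homP e a \<Longrightarrow> homP (k * e) (a ^ k)"
  by (induction k) (simp_all add: homP_one homP_mult)

lemma coeff_ofnat_mult: "coeff (of_nat k * (r :: bit poly)) i = of_nat k * coeff r i"
  by (simp add: of_nat_poly del: of_nat_Suc)

lemma homP_pderiv: "homP e h \<Longrightarrow> homP (e - 1) (pderiv h) \<and> (e = 0 \<longrightarrow> pderiv h = 0)"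
proof -
  assume h: "homP e h"
  have c: "coeff (coeff (pderiv h) j) i = of_nat (Suc j) * coeff (coeff h (Suc j)) i" for i j
    by (simp add: coeff_pderiv coeff_ofnat_mult del: of_nat_Suc)
  have z: "coeff (coeff (pderiv h) j) i = 0" if "i + j + 1 \<noteq> e" for i j
    using h that unfolding homP_iff c by simp
  have "homP (e - 1) (pderiv h)" unfolding homP_iff
  proof (intro allI impI)
    fix i j assume "i + j \<noteq> e - 1"
    then show "coeff (coeff (pderiv h) j) i = 0"
      by (cases "e = 0") (auto intro!: z)
  qed
  moreover have "e = 0 \<longrightarrow> pderiv h = 0"
    using z by (auto intro!: poly_eqI)
  ultimately show ?thesis by blast
qed

lemma homP_dx: "homP e h \<Longrightarrow> homP (e - 1) (dx h) \<and> (e = 0 \<longrightarrow> dx h = 0)"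
proof -
  assume h: "homP e h"
  have c: "coeff (coeff (dx h) j) i = of_nat (Suc i) * coeff (coeff h j) (Suc i)" for i j
    by (simp add: dx_def coeff_map_poly coeff_pderiv)
  have z: "coeff (coeff (dx h) j) i = 0" if "i + j + 1 \<noteq> e" for i j
    using h that unfolding homP_iff c by simp
  have "homP (e - 1) (dx h)" unfolding homP_iff
  proof (intro allI impI)
    fix i j assume "i + j \<noteq> e - 1"
    then show "coeff (coeff (dx h) j) i = 0"
      by (cases "e = 0") (auto intro!: z)
  qed
  moreover have "e = 0 \<longrightarrow> dx h = 0"
    using z by (auto intro!: poly_eqI)
  ultimately show ?thesis by blast
qed

definition Bd :: "P \<Rightarrow> nat" where "Bd q = Suc (degree (scl 1 1 q))"

lemma compP_Bd: "d \<ge> Bd q \<Longrightarrow> compP d q = 0"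
  by (simp add: compP_def Bd_def coeff_eq_0)

lemma decomp: "(\<forall>d\<ge>L. compP d q = 0) \<Longrightarrow> q = (\<Sum>d<L. compP d q)"
proof (intro poly_eqI)
  fix j i
  assume v: "\<forall>d\<ge>L. compP d q = 0"
  have "coeff (coeff (\<Sum>d<L. compP d q) j) i = (if i + j < L then coeff (coeff q j) i else 0)"
    by (simp add: coeff_sum compP_coeff sum.delta')
  moreover have "coeff (coeff q j) i = 0" if "i + j \<ge> L"
    using v that compP_coeff[of "i+j" q j i] by simp
  ultimately show "coeff (coeff q j) i = coeff (coeff (\<Sum>d<L. compP d q) j) i"
    by (auto simp: poly_eq_iff)
qed


definition iota :: "P \<Rightarrow> P" where "iota p = eval2 (w1 + w2) (w1 * w2) p"
definition tsqP :: "P \<Rightarrow> P" where "tsqP p = eval2 (w1 + w1^2) (w2 + w2^2) p"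

lemma rhom_iota: "rhom iota"
  unfolding iota_def[abs_def] by (rule rhom_eval2)
lemma rhom_tsqP: "rhom tsqP"
  unfolding tsqP_def[abs_def] by (rule rhom_eval2)

lemma c2_sq: "((a::'a::char2) + b)^2 = a^2 + b^2"
  using c2_frob[of a b 1] by simp

lemma ob_P_fun: "(ob :: bit \<Rightarrow> P) = (\<lambda>a. [:[:a:]:])"
  by (rule ext) (rule ob_P)

lemma tsq_eval2: "tsq p = eval2 (w1 + w1^2) (w2 + w1 * w2 + w2^2) p"
  by (simp add: tsq_def eval2_def ev1_def[abs_def] ob_P_fun)

lemma iota_tsq: "iota (tsq p) = tsqP (iota p)"
proof -
  have "iota (tsq p) = eval2 (iota (w1 + w1^2)) (iota (w2 + w1 * w2 + w2^2)) p"
    by (simp add: tsq_eval2 eval2_comp[OF rhom_iota])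
  also have "\<dots> = eval2 (tsqP (w1 + w2)) (tsqP (w1 * w2)) p"
  proof -
    have a: "iota (w1 + w1^2) = tsqP (w1 + w2)"
      by (simp add: iota_def tsqP_def eval2_add eval2_power c2_sq algebra_simps)
    have b: "iota (w2 + w1 * w2 + w2^2) = tsqP (w1 * w2)"
      by (simp add: iota_def tsqP_def eval2_add eval2_mult eval2_power power2_eq_square algebra_simps)
    show ?thesis by (simp only: a b)
  qed
  also have "\<dots> = tsqP (iota p)"
    by (simp add: iota_def eval2_comp[OF rhom_tsqP])
  finally show ?thesis .
qed

lemma iota_comp: "compP d (iota p) = iota (comp d p)"
proof -
  have "scl 1 1 (iota p) = eval2 (scl 1 1 (w1 + w2)) (scl 1 1 (w1 * w2)) p"
    by (simp add: iota_def eval2_comp[OF rhom_scl])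
  also have "\<dots> = eval2 (monom (w1 + w2) 1) (monom (w1 * w2) 2) p"
    by (simp add: scl_def eval2_add eval2_mult add_monom mult_monom numeral_2_eq_2)
  also have "\<dots> = map_poly iota (scl 1 2 p)"
    by (simp add: scl_def eval2_comp[OF rhom_map_poly[OF rhom_iota]] map_poly_monom rhom_zero[OF rhom_iota])
      (simp add: iota_def eval2_add eval2_mult)
  finally have "scl 1 1 (iota p) = map_poly iota (scl 1 2 p)" .
  then show ?thesis
    by (simp add: compP_def comp_scl coeff_map_poly rhom_zero[OF rhom_iota])
qed

lemma comp_vanish: "d \<ge> degbound p \<Longrightarrow> comp d p = 0"
proof (intro poly_eqI)
  fix b a assume d: "d \<ge> degbound p"
  have "coeff (coeff p b) a = 0" if "a + 2 * b = d"
  proof (cases "b \<le> degree p")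
    case True
    have "degree (coeff p b) \<le> (\<Sum>b\<le>degree p. degree (coeff p b))"
      by (rule member_le_sum) (use True in auto)
    then have "a > degree (coeff p b)" using d that True by (simp add: degbound_def)
    then show ?thesis by (simp add: coeff_eq_0)
  next
    case False then show ?thesis by (simp add: coeff_eq_0)
  qed
  then show "coeff (coeff (comp d p) b) a = coeff (coeff 0 b) a" by (simp add: comp_coeff)
qed

definition SqP :: "nat \<Rightarrow> P \<Rightarrow> nat \<Rightarrow> P" where
  "SqP k q L = (\<Sum>d<L. compP (d + k) (tsqP (compP d q)))"

lemma iota_Sq: "iota (Sq k p) = SqP k (iota p) (degbound p)"
  by (simp add: Sq_def SqP_def rhom_sum[OF rhom_iota] iota_comp[symmetric] iota_tsq)

lemma iota_vanish: "d \<ge> degbound p \<Longrightarrow> compP d (iota p) = 0"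
  by (simp add: iota_comp comp_vanish rhom_zero[OF rhom_iota])

section \<open>lowest terms of tsqP\<close>

lemma tsqP_low:
  assumes h: "homP f g"
  shows "compP j (tsqP g) = (if j < f then 0 else coeff (eval2 [:w1, w1^2:] [:w2, w2^2:] g) (j - f))"
proof -
  define u :: "P poly" where "u = [:w1, w1^2:]"
  define v :: "P poly" where "v = [:w2, w2^2:]"
  define \<Phi> :: "P poly \<Rightarrow> P poly" where "\<Phi> r = poly (map_poly (eval2 u v) r) [:0,1:]" for r
  have r\<Phi>: "rhom \<Phi>"
  proof -
    have "\<Phi> = (\<lambda>r. poly r [:0,1:]) \<circ> map_poly (eval2 u v)" by (auto simp: \<Phi>_def)
    thus ?thesis by (simp add: rhom_comp rhom_poly rhom_map_poly rhom_eval2)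
  qed
  have sg: "scl 1 1 g = monom g f"
  proof (rule poly_eqI)
    fix d
    have "coeff (scl 1 1 g) d = compP d g" by (simp add: compP_def)
    then show "coeff (scl 1 1 g) d = coeff (monom g f) d" using compP_hom[OF h, of d] by simp
  qed
  have m: "monom a (Suc 0) + (monom a (Suc 0)) ^ 2 = [:0, a, a^2:]" for a :: P
    by (simp add: monom_Suc monom_0 power2_eq_square)
  have "scl 1 1 (tsqP g) = eval2 (scl 1 1 (w1 + w1^2)) (scl 1 1 (w2 + w2^2)) g"
    by (simp add: tsqP_def eval2_comp[OF rhom_scl])
  also have "\<dots> = eval2 (\<Phi> (monom w1 1)) (\<Phi> (monom w2 1)) g"
    by (simp add: scl_def eval2_add eval2_power \<Phi>_def map_poly_monom poly_monom u_def v_def m)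
  also have "\<dots> = \<Phi> (scl 1 1 g)"
    by (simp add: scl_def eval2_comp[OF r\<Phi>])
  also have "\<dots> = eval2 u v g * [:0,1:] ^ f"
    unfolding sg \<Phi>_def by (simp add: map_poly_monom poly_monom)
  finally have "scl 1 1 (tsqP g) = monom 1 f * eval2 u v g" by (simp add: mult.commute monom_altdef)
  then show ?thesis
    by (simp add: compP_def coeff_monom_mult u_def v_def)
qed

lemma tsqP_low0: "homP f g \<Longrightarrow> compP f (tsqP g) = g"
proof -
  assume h: "homP f g"
  have "coeff (eval2 [:w1, w1^2:] [:w2, w2^2:] g) 0 = eval2 w1 w2 g"
    using eval2_comp[OF rhom_coeff0, of "[:w1,w1^2:]" "[:w2,w2^2:]" g] by simp
  then show ?thesis by (simp add: tsqP_low[OF h] eval2_id)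
qed

lemma tsqP_lowlt: "homP f g \<Longrightarrow> j < f \<Longrightarrow> compP j (tsqP g) = 0"
  by (simp add: tsqP_low)

lemma tsqP_low1: "homP f g \<Longrightarrow> compP (f + 1) (tsqP g) = w1^2 * dx g + w2^2 * pderiv g"
proof -
  assume h: "homP f g"
  have "coeff (eval2 [:w1, w1^2:] [:w2, w2^2:] g) 1 = eval2 w1 w2 (dx g) * w1^2 + eval2 w1 w2 (pderiv g) * w2^2"
    using chain_eval2[OF rhom_coeff0 der_coeff1, of "[:w1, w1^2:]" "[:w2, w2^2:]" g] by simp
  then show ?thesis by (simp add: tsqP_low[OF h] eval2_id mult.commute)
qed


definition DD :: "nat \<Rightarrow> P \<Rightarrow> P" where
  "DD n q = w1^(2^(n+1)) * dx q + w2^(2^(n+1)) * pderiv q"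

lemma DD_add: "DD n (a + b) = DD n a + DD n b"
  by (simp add: DD_def dx_add pderiv_add algebra_simps)
lemma DD_zero[simp]: "DD n 0 = 0" by (simp add: DD_def)
lemma DD_sum: "DD n (\<Sum>i\<in>A. f i) = (\<Sum>i\<in>A. DD n (f i))"
  by (induction A rule: infinite_finite_induct) (simp_all add: DD_add)

lemma DD_hom0: "homP 0 h \<Longrightarrow> DD n h = 0"
  using homP_dx[of 0 h] homP_pderiv[of 0 h] by (simp add: DD_def)

lemma DD_hom: "homP e h \<Longrightarrow> homP (e + 2^(n+1) - 1) (DD n h)"
proof (cases "e = 0")
  case True
  assume "homP e h" with True show ?thesis by (simp add: DD_hom0)
next
  case False
  assume h: "homP e h"
  have a: "homP (2^(n+1) * 1) (w1^(2^(n+1)))" by (rule homP_power[OF homP_w1])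
  have b: "homP (2^(n+1) * 1) (w2^(2^(n+1)))" by (rule homP_power[OF homP_w2])
  have "homP (2^(n+1) * 1 + (e - 1)) (DD n h)"
    unfolding DD_def
    by (intro homP_add homP_mult a b conjunct1[OF homP_dx[OF h]] conjunct1[OF homP_pderiv[OF h]])
  moreover have "2^(n+1) * 1 + (e - 1) = e + 2^(n+1) - 1" using False by simp
  ultimately show ?thesis by simp
qed

lemma compP_DD_hom: "compP d (DD n (compP e q)) = (if d = e + (2^(n+1) - 1) then DD n (compP e q) else 0)"
proof (cases "e = 0")
  case True then show ?thesis using DD_hom0[OF homP_compP[of 0 q]] by simp
next
  case False
  have "e + 2^(n+1) - 1 = e + (2^(n+1) - 1)" by (simp add: Nat.add_diff_assoc)
  then show ?thesis using compP_hom[OF DD_hom[OF homP_compP[of e q]], of d n] by simp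
qed

lemma compP_DD: "compP d (DD n q) = (if 2^(n+1) - 1 \<le> d then DD n (compP (d - (2^(n+1) - 1)) q) else 0)"
proof -
  define K :: nat where "K = 2^(n+1) - 1"
  define L where "L = Bd q"
  have v: "\<forall>d\<ge>L. compP d q = 0" by (simp add: L_def compP_Bd)
  have "compP d (DD n q) = compP d (DD n (\<Sum>e<L. compP e q))"
    using decomp[OF v] by simp
  also have "\<dots> = (\<Sum>e<L. if d = e + K then DD n (compP e q) else 0)"
    by (simp add: DD_sum compP_sum compP_DD_hom K_def)
  also have "\<dots> = (if K \<le> d then DD n (compP (d - K) q) else 0)"
  proof (cases "K \<le> d")
    case True
    have "(\<Sum>e<L. if d = e + K then DD n (compP e q) else 0) = (\<Sum>e<L. if e = d - K then DD n (compP e q) else 0)"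
      by (rule sum.cong) (use True in auto)
    also have "\<dots> = DD n (compP (d - K) q)"
      using v by (auto simp: sum.delta)
    finally show ?thesis using True by simp
  next
    case False then show ?thesis by (auto intro!: sum.neutral)
  qed
  finally show ?thesis by (simp add: K_def)
qed

lemma DD_vanish: "\<forall>d\<ge>L. compP d q = 0 \<Longrightarrow> \<forall>d\<ge>L + (2^(n+1) - 1). compP d (DD n q) = 0"
  by (auto simp: compP_DD)

lemma DD_compP: "DD n (compP m Z) = compP (m + (2^(n+1) - 1)) (DD n Z)"
  by (simp add: compP_DD)

lemma SqP_mono: "\<forall>d\<ge>L1. compP d q = 0 \<Longrightarrow> L1 \<le> L2 \<Longrightarrow> SqP k q L1 = SqP k q L2"
  unfolding SqP_def
  by (rule sum.mono_neutral_left) (auto simp: rhom_zero[OF rhom_tsqP])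

lemma SqP_bound: "\<forall>d\<ge>L1. compP d q = 0 \<Longrightarrow> \<forall>d\<ge>L2. compP d q = 0 \<Longrightarrow> SqP k q L1 = SqP k q L2"
  by (cases "L1 \<le> L2") (auto intro: SqP_mono SqP_mono[symmetric])

lemma DD_sumdecomp: "\<forall>d\<ge>L. compP d q = 0 \<Longrightarrow> DD n q = (\<Sum>d<L. DD n (compP d q))"
  using decomp[of L q] by (simp add: DD_sum[symmetric])

lemma SqP_base:
  assumes v: "\<forall>d\<ge>L. compP d q = 0"
  shows "SqP 1 q L = DD 0 q"
proof -
  have "SqP 1 q L = (\<Sum>d<L. DD 0 (compP d q))"
    unfolding SqP_def by (rule sum.cong) (simp_all add: tsqP_low1[OF homP_compP, simplified] DD_def)
  also have "\<dots> = DD 0 q" using DD_sumdecomp[OF v, of 0] by simp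
  finally show ?thesis .
qed


lemma dx_w1[simp]: "dx w1 = 1"
  by (simp add: w1_def dx_pCons pCons_one pderiv_pCons)
lemma dx_w2[simp]: "dx w2 = 0"
  by (simp add: w2_def dx_pCons)
lemma pderiv_w1[simp]: "pderiv w1 = 0"
  by (simp add: w1_def)
lemma pderiv_w2[simp]: "pderiv w2 = 1"
  by (simp add: w2_def pderiv_pCons)

lemma dx_tsqP: "dx (tsqP h) = tsqP (dx h)"
  using chain_eval2[OF rhom_id der_dx, of "w1 + w1^2" "w2 + w2^2" h]
  by (simp add: tsqP_def dx_add dx_mult power2_eq_square)

lemma pderiv_tsqP: "pderiv (tsqP h) = tsqP (pderiv h)"
  using chain_eval2[OF rhom_id der_pderiv, of "w1 + w1^2" "w2 + w2^2" h]
  by (simp add: tsqP_def pderiv_add pderiv_mult power2_eq_square)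

lemma tsqP_w1: "tsqP w1 = w1 + w1^2" by (simp add: tsqP_def)
lemma tsqP_w2: "tsqP w2 = w2 + w2^2" by (simp add: tsqP_def)

lemma c2_lin: "(a::'a::char2)*x + b*y + ((a + c)*x + (b + d)*y) = c*x + d*y"
proof -
  have cc: "(u::'a) + (u + z) = z" for u z by (simp add: add.assoc[symmetric])
  show ?thesis by (simp add: algebra_simps cc)
qed

lemma key_diff:
  "DD n (tsqP h) + tsqP (DD n h) = w1^(2^(n+2)) * tsqP (dx h) + w2^(2^(n+2)) * tsqP (pderiv h)"
proof -
  have f1: "(w1 + w1^2)^(2^(n+1)) = w1^(2^(n+1)) + w1^(2^(n+2))"
    using c2_frob[of w1 "w1^2" "n+1"] by (simp add: power_mult[symmetric])
  have f2: "(w2 + w2^2)^(2^(n+1)) = w2^(2^(n+1)) + w2^(2^(n+2))"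
    using c2_frob[of w2 "w2^2" "n+1"] by (simp add: power_mult[symmetric])
  have "tsqP (DD n h) = (w1 + w1^2)^(2^(n+1)) * tsqP (dx h) + (w2 + w2^2)^(2^(n+1)) * tsqP (pderiv h)"
    by (simp add: DD_def rhom_add[OF rhom_tsqP] rhom_mult[OF rhom_tsqP] rhom_power[OF rhom_tsqP] tsqP_w1 tsqP_w2)
  then have "DD n (tsqP h) + tsqP (DD n h) = w1^(2^(n+1)) * tsqP (dx h) + w2^(2^(n+1)) * tsqP (pderiv h)
     + ((w1^(2^(n+1)) + w1^(2^(n+2))) * tsqP (dx h) + (w2^(2^(n+1)) + w2^(2^(n+2))) * tsqP (pderiv h))"
    by (simp only: DD_def dx_tsqP pderiv_tsqP f1 f2)
  also have "\<dots> = w1^(2^(n+2)) * tsqP (dx h) + w2^(2^(n+2)) * tsqP (pderiv h)"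
    by (rule c2_lin)
  finally show ?thesis .
qed

lemma KS:
  assumes h: "homP e h"
  shows "compP (e + 2^(n+1) + 2^(n+1) - 1) (DD n (tsqP h)) + compP (e + 2^(n+1) + 2^(n+1) - 1) (tsqP (DD n h)) = DD (Suc n) h"
proof (cases "e = 0")
  case True
  then have "dx h = 0" "pderiv h = 0" using homP_dx[OF h] homP_pderiv[OF h] by auto
  then show ?thesis by (simp add: DD_def dx_tsqP pderiv_tsqP rhom_zero[OF rhom_tsqP] compP_add[symmetric])
next
  case False
  have a: "homP (2^(n+2) * 1) (w1^(2^(n+2)))" by (rule homP_power[OF homP_w1])
  have b: "homP (2^(n+2) * 1) (w2^(2^(n+2)))" by (rule homP_power[OF homP_w2])
  have idx: "e + 2^(n+1) + 2^(n+1) - 1 - 2^(n+2) = e - 1" "2^(n+2) \<le> e + 2^(n+1) + 2^(n+1) - 1"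
    using False by simp_all
  have "compP (e + 2^(n+1) + 2^(n+1) - 1) (DD n (tsqP h)) + compP (e + 2^(n+1) + 2^(n+1) - 1) (tsqP (DD n h))
     = compP (e + 2^(n+1) + 2^(n+1) - 1) (w1^(2^(n+2)) * tsqP (dx h) + w2^(2^(n+2)) * tsqP (pderiv h))"
    by (simp add: compP_add[symmetric] key_diff)
  also have "\<dots> = w1^(2^(n+2)) * dx h + w2^(2^(n+2)) * pderiv h"
    using idx tsqP_low0[OF conjunct1[OF homP_dx[OF h]]] tsqP_low0[OF conjunct1[OF homP_pderiv[OF h]]]
    by (simp add: compP_add compP_mult_hom[OF a[simplified]] compP_mult_hom[OF b[simplified]]
        tsqP_low0[OF conjunct1[OF homP_dx[OF h]]] tsqP_low0[OF conjunct1[OF homP_pderiv[OF h]]])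
  also have "\<dots> = DD (Suc n) h" by (simp add: DD_def)
  finally show ?thesis .
qed

lemma sum_split_shift: fixes a b :: nat shows "(\<Sum>d<a + b. f d) = (\<Sum>d<b. f d) + (\<Sum>e<a. f (e + b))"
  by (induction a) (simp_all add: add.commute add.left_commute)

lemma ST:
  assumes v: "\<forall>d\<ge>L. compP d q = 0"
  shows "DD n (SqP (2^(n+1)) q L) + SqP (2^(n+1)) (DD n q) (L + (2^(n+1) - 1)) = DD (Suc n) q"
proof -
  define N :: nat where "N = 2^(n+1)"
  have N1: "N \<ge> 2" by (simp add: N_def)
  have s1: "DD n (SqP N q L) = (\<Sum>e<L. compP (e + N + N - 1) (DD n (tsqP (compP e q))))"
    unfolding SqP_def DD_sum
    by (rule sum.cong) (simp_all add: DD_compP N_def)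
  have s2: "SqP N (DD n q) (L + (N - 1)) = (\<Sum>e<L. compP (e + N + N - 1) (tsqP (DD n (compP e q))))"
  proof -
    have cd: "compP (e + (N - 1)) (DD n q) = DD n (compP e q)" for e
      using compP_DD[of "e + (N - 1)" n q] by (simp add: N_def)
    have ix: "e + (N - 1) + N = e + N + N - 1" for e using N1 by simp
    have "SqP N (DD n q) (L + (N - 1)) = (\<Sum>d<N - 1. compP (d + N) (tsqP (compP d (DD n q))))
        + (\<Sum>e<L. compP (e + (N - 1) + N) (tsqP (compP (e + (N - 1)) (DD n q))))"
      unfolding SqP_def by (rule sum_split_shift)
    also have "(\<Sum>d<N - 1. compP (d + N) (tsqP (compP d (DD n q)))) = 0"
      by (rule sum.neutral) (auto simp: compP_DD N_def rhom_zero[OF rhom_tsqP])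
    also have "(\<Sum>e<L. compP (e + (N - 1) + N) (tsqP (compP (e + (N - 1)) (DD n q))))
        = (\<Sum>e<L. compP (e + N + N - 1) (tsqP (DD n (compP e q))))"
      by (rule sum.cong) (simp_all only: cd ix)
    finally show ?thesis by simp
  qed
  have ks: "compP (e + N + N - 1) (DD n (tsqP (compP e q))) + compP (e + N + N - 1) (tsqP (DD n (compP e q))) = DD (Suc n) (compP e q)" for e
    unfolding N_def by (rule KS[OF homP_compP])
  have "DD n (SqP N q L) + SqP N (DD n q) (L + (N - 1)) = (\<Sum>e<L. DD (Suc n) (compP e q))"
    unfolding s1 s2 sum.distrib[symmetric]
    by (rule sum.cong) (simp_all only: ks)
  also have "\<dots> = DD (Suc n) q" using DD_sumdecomp[OF v] by simp
  finally show ?thesis by (simp add: N_def)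
qed

lemma iota_Q: "iota (Q n p) = DD n (iota p)"
proof (induction n arbitrary: p)
  case 0
  show ?case using SqP_base[of "degbound p" "iota p"] iota_vanish[of p]
    by (simp add: iota_Sq)
next
  case (Suc n)
  define N :: nat where "N = 2^(n+1)"
  have vp: "\<forall>d\<ge>degbound p. compP d (iota p) = 0" using iota_vanish by blast
  have vq: "\<forall>d\<ge>degbound (Q n p). compP d (DD n (iota p)) = 0"
    using iota_vanish[of "Q n p"] Suc.IH by simp
  have "iota (Q (Suc n) p) = iota (Q n (Sq N p)) + iota (Sq N (Q n p))"
    by (simp add: N_def rhom_add[OF rhom_iota])
  also have "\<dots> = DD n (SqP N (iota p) (degbound p)) + SqP N (DD n (iota p)) (degbound (Q n p))"
    by (simp add: Suc.IH iota_Sq)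
  also have "SqP N (DD n (iota p)) (degbound (Q n p)) = SqP N (DD n (iota p)) (degbound p + (2^(n+1) - 1))"
    by (rule SqP_bound[OF vq DD_vanish[OF vp]])
  also have "DD n (SqP N (iota p) (degbound p)) + \<dots> = DD (Suc n) (iota p)"
    unfolding N_def by (rule ST[OF vp])
  finally show ?case .
qed


lemma iota_w1[simp]: "iota w1 = w1 + w2" by (simp add: iota_def)
lemma iota_w2[simp]: "iota w2 = w1 * w2" by (simp add: iota_def)

lemma c2_step: "((a::'a::char2) + b) * (a^(k+2) + b^(k+2)) + a*b*(a^(k+1) + b^(k+1)) = a^(k+3) + b^(k+3)"
proof -
  have cc: "(u::'a) + (u + z) = z" for u z by (simp add: add.assoc[symmetric])
  have cc2: "(u::'a) + u = 0" for u by simp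
  show ?thesis by (simp add: algebra_simps cc power_Suc numeral_3_eq_3 numeral_2_eq_2)
qed

lemma iota_wbar: "(w1 + w2) * iota (wbar k) = w1^(k+1) + w2^(k+1)"
proof (induction k rule: wbar.induct)
  case 1 then show ?case by (simp add: rhom_one[OF rhom_iota])
next
  case 2
  have "iota (- w1) = iota w1" by simp
  then show ?case by (simp add: c2_sq power2_eq_square[symmetric])
next
  case (3 k)
  have "(w1 + w2) * iota (wbar (Suc (Suc k)))
      = (w1 + w2) * ((w1 + w2) * iota (wbar (Suc k)) + w1 * w2 * iota (wbar k))"
    by (simp add: rhom_add[OF rhom_iota] rhom_mult[OF rhom_iota])
  also have "\<dots> = (w1 + w2) * ((w1 + w2) * iota (wbar (Suc k))) + w1 * w2 * ((w1 + w2) * iota (wbar k))"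
    by (simp add: algebra_simps)
  also have "\<dots> = (w1 + w2) * (w1^(k+2) + w2^(k+2)) + w1 * w2 * (w1^(k+1) + w2^(k+1))"
    using 3 by simp
  also have "\<dots> = w1^(k+3) + w2^(k+3)" by (rule c2_step)
  finally show ?case by (simp add: numeral_3_eq_3)
qed

lemma iota_w1wbar: "iota (w1 * wbar k) = w1^(k+1) + w2^(k+1)"
  using iota_wbar[of k] by (simp add: rhom_mult[OF rhom_iota])

lemma dx_w1_pow: "dx (w1 ^ Suc m) = of_nat (Suc m) * w1 ^ m"
  by (induction m) (simp_all add: dx_mult algebra_simps)
lemma dx_w2_pow: "dx (w2 ^ m) = 0"
  by (induction m) (simp_all add: dx_mult)
lemma pderiv_w1_pow: "pderiv (w1 ^ m) = 0"
  by (induction m) (simp_all add: pderiv_mult)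
lemma pderiv_w2_pow: "pderiv (w2 ^ Suc m) = of_nat (Suc m) * w2 ^ m"
  by (induction m) (simp_all add: pderiv_mult algebra_simps)

lemma DD_odd: "DD n (w1^(Suc (2*l)) + w2^(Suc (2*l))) = w1^(2^(n+1) + 2*l) + w2^(2^(n+1) + 2*l)"
proof -
  have o: "(of_nat (Suc (2*l)) :: P) = 1" by (simp add: c2_ofnat del: of_nat_Suc)
  show ?thesis
    by (simp only: DD_def dx_add pderiv_add dx_w1_pow dx_w2_pow pderiv_w1_pow pderiv_w2_pow o)
      (simp add: power_add)
qed

lemma iota_eval_w2: "eval2 0 w2 (iota p) = eval2 w2 0 p"
  by (simp add: iota_def eval2_comp[OF rhom_eval2] eval2_add eval2_mult)

lemma ev1_w2_pCons: "ev1 w2 (pCons a c) = pCons [:a:] (ev1 w2 c)"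
  by (simp add: ev1_pCons ob_P w2_def)

lemma ev1_w2_zero: "ev1 w2 c = 0 \<Longrightarrow> c = 0"
  by (induction c) (simp_all add: ev1_w2_pCons)

lemma iota_inj0: "iota p = 0 \<Longrightarrow> p = 0"
proof (induction p)
  case 0 then show ?case by simp
next
  case (pCons c p)
  have "eval2 w2 0 (pCons c p) = 0"
    using iota_eval_w2[of "pCons c p"] pCons.prems by simp
  then have c: "c = 0" by (simp add: eval2_pCons ev1_w2_zero)
  have "pCons c p = w2 * p" using c by (simp add: w2_mult)
  then have "w1 * w2 * iota p = 0" using pCons.prems by (simp add: rhom_mult[OF rhom_iota])
  moreover have "w1 * w2 \<noteq> (0::P)" by (simp add: w1_def w2_def)
  ultimately have "iota p = 0" by simp
  then show ?case using pCons.IH c by simp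
qed

theorem proposition5p7:
  fixes n l :: nat
  shows "Q n (w1 * wbar (2*l)) = w1 * wbar (2^(n+1) - 1 + 2*l)"
proof -
  have "iota (Q n (w1 * wbar (2*l))) = DD n (w1^(Suc (2*l)) + w2^(Suc (2*l)))"
    by (simp add: iota_Q iota_w1wbar)
  also have "\<dots> = w1^(2^(n+1) + 2*l) + w2^(2^(n+1) + 2*l)" by (rule DD_odd)
  also have "\<dots> = iota (w1 * wbar (2^(n+1) - 1 + 2*l))"
  proof -
    have "2^(n+1) - 1 + 2*l + 1 = 2^(n+1) + (2*l :: nat)" by simp
    then show ?thesis by (simp only: iota_w1wbar)
  qed
  finally have "iota (Q n (w1 * wbar (2*l)) + w1 * wbar (2^(n+1) - 1 + 2*l)) = 0"
    by (simp add: rhom_add[OF rhom_iota])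
  then have "Q n (w1 * wbar (2*l)) + w1 * wbar (2^(n+1) - 1 + 2*l) = 0" by (rule iota_inj0)
  then show ?thesis using add.inverse_unique c2_minus by metis
qed

end
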